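(* Under the standing assumptions below, let $\rho>0$, $\epsilon>0$, and let $(x_\epsilon,y_\epsilon,\lambda_\epsilon,z_\epsilon)\in\mathcal X\times\mathcal Y\times\Lambda\times\mathcal Y$ be an $\epsilon$-optimal solution of the min-max-min problem $\min_{x\in\mathcal X}\max_{y\in\mathcal Y,\lambda\in\Lambda}\min_{z\in\mathcal Y}P_\rho(x,y,\lambda,z)$. Then $$\Phi(x_\epsilon)\le\Phi_\rho^*+2\epsilon+\delta_\rho(x_\epsilon),\qquad f(x_\epsilon,y_\epsilon,\lambda_\epsilon)\ge\Phi^*-2\epsilon-\delta_\rho(x_\epsilon),$$ $$g(y_\epsilon,\lambda_\epsilon)-\min_{z\in\mathcal Y}g(z,\lambda_\epsilon)\le\rho^{-1}\big(f_{\rm hi}-\Phi^*+2\epsilon+\delta_\rho(x_\epsilon)\big).$$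
   Context: Standing setting. $\mathcal X\subset\mathbb R^{d_x}$, $\mathcal Y\subset\mathbb R^{d_y}$, $\Lambda\subset\mathbb R^{d_\lambda}$ are nonempty convex compact sets. $\bar f:\mathbb R^{d_x}\times\mathbb R^{d_y}\to\mathbb R$ is continuously differentiable with $\nabla\bar f$ Lipschitz on $\mathcal X\times\mathcal Y$; $A\in\mathbb R^{d_\lambda\times d_x}$, $B\in\mathbb R^{d_\lambda\times d_y}$, $c\in\mathbb R^{d_\lambda}$, and $f(x,y,\lambda):=\bar f(x,y)+\lambda^T(Ax+By-c)$. $g:\mathbb R^{d_y}\times\mathbb R^{d_\lambda}\to\mathbb R$ is continuously differentiable with $\nabla g$ Lipschitz on $\mathcal Y\times\Lambda$, and $g(\cdot,\lambda)$ is convex for each $\lambda\in\Lambda$. Definitions: $f_{\rm hi}:=\max_{\mathcal X\times\mathcal Y\times\Lambda}f$; $\mathcal F_{\rm low}:=\{(y,\lambda)\in\mathcal Y\times\Lambda:\ g(y,\lambda)=\min_{z\in\mathcal Y}g(z,\lambda)\}$; $h_g(y,\lambda):=g(y,\lambda)-\min_{z\in\mathcal Y}g(z,\lambda)$; $P_\rho(x,y,\lambda,z):=f(x,y,\lambda)-\rho(g(y,\lambda)-g(z,\lambda))$; $\Psi_\rho(x,y,\lambda):=\min_{z\in\mathcal Y}P_\rho(x,y,\lambda,z)$; $F_\rho(x):=\max_{y\in\mathcal Y,\lambda\in\Lambda}\Psi_\rho(x,y,\lambda)$; $\Phi_\rho^*:=\min_{x\in\mathcal X}F_\rho(x)$;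 $\Phi(x):=\max_{(y,\lambda)\in\mathcal F_{\rm low}}f(x,y,\lambda)$; $\Phi^*:=\min_{x\in\mathcal X}\Phi(x)$; $\delta_\rho(x):=|F_\rho(x)-\Phi(x)|$. A point $(x_\epsilon,y_\epsilon,\lambda_\epsilon,z_\epsilon)\in\mathcal X\times\mathcal Y\times\Lambda\times\mathcal Y$ is an $\epsilon$-optimal solution of $\min_{x}\max_{y,\lambda}\min_{z}P_\rho$ if (i) $P_\rho(x_\epsilon,y_\epsilon,\lambda_\epsilon,z_\epsilon)-\min_{z\in\mathcal Y}P_\rho(x_\epsilon,y_\epsilon,\lambda_\epsilon,z)\le\epsilon$, (ii) $\max_{y\in\mathcal Y,\lambda\in\Lambda}\min_{z\in\mathcal Y}P_\rho(x_\epsilon,y,\lambda,z)-P_\rho(x_\epsilon,y_\epsilon,\lambda_\epsilon,z_\epsilon)\le\epsilon$, (iii) $P_\rho(x_\epsilon,y_\epsilon,\lambda_\epsilon,z_\epsilon)-\Phi_\rho^*\le\epsilon$. *)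

theory Defs
  imports "HOL-Analysis.Analysis"
begin

definition C1_lipgrad :: "('a::euclidean_space \<Rightarrow> real) \<Rightarrow> 'a set \<Rightarrow> bool" where
  "C1_lipgrad F S \<longleftrightarrow>
     (\<exists>grad :: 'a \<Rightarrow> 'a.
        (\<forall>p. (F has_derivative (\<lambda>h. grad p \<bullet> h)) (at p)) \<and>
        continuous_on UNIV grad \<and>
        (\<exists>K. K-lipschitz_on S grad))"

definition f_fun ::
  "(real^'dx \<Rightarrow> real^'dy \<Rightarrow> real) \<Rightarrow> real^'dx^'dl \<Rightarrow> real^'dy^'dl \<Rightarrow> real^'dl
     \<Rightarrow> real^'dx \<Rightarrow> real^'dy \<Rightarrow> real^'dl \<Rightarrow> real" where
  "f_fun fbar A B c x y l = fbar x y + l \<bullet> (A *v x + B *v y - c)"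

definition f_hi :: "('x \<Rightarrow> 'y \<Rightarrow> 'l \<Rightarrow> real) \<Rightarrow> 'x set \<Rightarrow> 'y set \<Rightarrow> 'l set \<Rightarrow> real" where
  "f_hi f X Y L = Sup ((\<lambda>(x,y,l). f x y l) ` (X \<times> Y \<times> L))"

definition gmin :: "('y \<Rightarrow> 'l \<Rightarrow> real) \<Rightarrow> 'y set \<Rightarrow> 'l \<Rightarrow> real" where
  "gmin g Y l = Inf ((\<lambda>z. g z l) ` Y)"

definition F_low :: "('y \<Rightarrow> 'l \<Rightarrow> real) \<Rightarrow> 'y set \<Rightarrow> 'l set \<Rightarrow> ('y \<times> 'l) set" where
  "F_low g Y L = {(y,l). y \<in> Y \<and> l \<in> L \<and> g y l = gmin g Y l}"

definition h_g :: "('y \<Rightarrow> 'l \<Rightarrow> real) \<Rightarrow> 'y set \<Rightarrow> 'y \<Rightarrow> 'l \<Rightarrow> real" where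
  "h_g g Y y l = g y l - gmin g Y l"

definition P_rho :: "real \<Rightarrow> ('x \<Rightarrow> 'y \<Rightarrow> 'l \<Rightarrow> real) \<Rightarrow> ('y \<Rightarrow> 'l \<Rightarrow> real)
     \<Rightarrow> 'x \<Rightarrow> 'y \<Rightarrow> 'l \<Rightarrow> 'y \<Rightarrow> real" where
  "P_rho \<rho> f g x y l z = f x y l - \<rho> * (g y l - g z l)"

definition Psi_rho :: "real \<Rightarrow> ('x \<Rightarrow> 'y \<Rightarrow> 'l \<Rightarrow> real) \<Rightarrow> ('y \<Rightarrow> 'l \<Rightarrow> real) \<Rightarrow> 'y set
     \<Rightarrow> 'x \<Rightarrow> 'y \<Rightarrow> 'l \<Rightarrow> real" where
  "Psi_rho \<rho> f g Y x y l = Inf ((\<lambda>z. P_rho \<rho> f g x y l z) ` Y)"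

definition F_rho :: "real \<Rightarrow> ('x \<Rightarrow> 'y \<Rightarrow> 'l \<Rightarrow> real) \<Rightarrow> ('y \<Rightarrow> 'l \<Rightarrow> real) \<Rightarrow> 'y set \<Rightarrow> 'l set
     \<Rightarrow> 'x \<Rightarrow> real" where
  "F_rho \<rho> f g Y L x = Sup ((\<lambda>(y,l). Psi_rho \<rho> f g Y x y l) ` (Y \<times> L))"

definition Phi_rho_star :: "real \<Rightarrow> ('x \<Rightarrow> 'y \<Rightarrow> 'l \<Rightarrow> real) \<Rightarrow> ('y \<Rightarrow> 'l \<Rightarrow> real)
     \<Rightarrow> 'x set \<Rightarrow> 'y set \<Rightarrow> 'l set \<Rightarrow> real" where
  "Phi_rho_star \<rho> f g X Y L = Inf (F_rho \<rho> f g Y L ` X)"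

definition Phi :: "('x \<Rightarrow> 'y \<Rightarrow> 'l \<Rightarrow> real) \<Rightarrow> ('y \<Rightarrow> 'l \<Rightarrow> real) \<Rightarrow> 'y set \<Rightarrow> 'l set \<Rightarrow> 'x \<Rightarrow> real" where
  "Phi f g Y L x = Sup ((\<lambda>(y,l). f x y l) ` F_low g Y L)"

definition Phi_star :: "('x \<Rightarrow> 'y \<Rightarrow> 'l \<Rightarrow> real) \<Rightarrow> ('y \<Rightarrow> 'l \<Rightarrow> real)
     \<Rightarrow> 'x set \<Rightarrow> 'y set \<Rightarrow> 'l set \<Rightarrow> real" where
  "Phi_star f g X Y L = Inf (Phi f g Y L ` X)"

definition delta_rho :: "real \<Rightarrow> ('x \<Rightarrow> 'y \<Rightarrow> 'l \<Rightarrow> real) \<Rightarrow> ('y \<Rightarrow> 'l \<Rightarrow> real)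
     \<Rightarrow> 'y set \<Rightarrow> 'l set \<Rightarrow> 'x \<Rightarrow> real" where
  "delta_rho \<rho> f g Y L x = \<bar>F_rho \<rho> f g Y L x - Phi f g Y L x\<bar>"

definition eps_optimal :: "real \<Rightarrow> real \<Rightarrow> ('x \<Rightarrow> 'y \<Rightarrow> 'l \<Rightarrow> real) \<Rightarrow> ('y \<Rightarrow> 'l \<Rightarrow> real)
     \<Rightarrow> 'x set \<Rightarrow> 'y set \<Rightarrow> 'l set \<Rightarrow> 'x \<Rightarrow> 'y \<Rightarrow> 'l \<Rightarrow> 'y \<Rightarrow> bool" where
  "eps_optimal \<epsilon> \<rho> f g X Y L xe ye le ze \<longleftrightarrow>
     xe \<in> X \<and> ye \<in> Y \<and> le \<in> L \<and> ze \<in> Y \<and>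
     P_rho \<rho> f g xe ye le ze - Inf ((\<lambda>z. P_rho \<rho> f g xe ye le z) ` Y) \<le> \<epsilon> \<and>
     Sup ((\<lambda>(y,l). Inf ((\<lambda>z. P_rho \<rho> f g xe y l z) ` Y)) ` (Y \<times> L))
       - P_rho \<rho> f g xe ye le ze \<le> \<epsilon> \<and>
     P_rho \<rho> f g xe ye le ze - Phi_rho_star \<rho> f g X Y L \<le> \<epsilon>"

end

theory Submission
  imports Defs
begin

lemma C1_cont: "C1_lipgrad F S \<Longrightarrow> continuous_on UNIV F"
  unfolding C1_lipgrad_def
  by (metis continuous_at_imp_continuous_on has_derivative_continuous)

lemma f_fun_cont:
  assumes "continuous_on UNIV (\<lambda>p. fbar (fst p) (snd p))"
  shows "continuous_on UNIV (\<lambda>t::(real^'dx) \<times> (real^'dy) \<times> (real^'dl).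
            f_fun fbar A B c (fst t) (fst (snd t)) (snd (snd t)))"
proof -
  have "continuous_on UNIV ((\<lambda>p. fbar (fst p) (snd p)) \<circ> (\<lambda>t::(real^'dx) \<times> (real^'dy) \<times> (real^'dl). (fst t, fst (snd t))))"
    by (intro continuous_on_compose continuous_intros continuous_on_subset[OF assms]) auto
  then have "continuous_on UNIV (\<lambda>t::(real^'dx) \<times> (real^'dy) \<times> (real^'dl). fbar (fst t) (fst (snd t)))"
    by (simp add: o_def)
  moreover have "continuous_on UNIV (\<lambda>t::(real^'dx) \<times> (real^'dy) \<times> (real^'dl). A *v fst t)"
    by (rule continuous_on_compose2[OF matrix_vector_mult_linear_continuous_on continuous_on_fst[OF continuous_on_id]]) auto
  moreover have "continuous_on UNIV (\<lambda>t::(real^'dx) \<times> (real^'dy) \<times> (real^'dl). B *v fst (snd t))"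
    by (rule continuous_on_compose2[OF matrix_vector_mult_linear_continuous_on continuous_on_fst[OF continuous_on_snd[OF continuous_on_id]]]) auto
  ultimately show ?thesis unfolding f_fun_def
    by (intro continuous_intros) auto
qed

theorem mainTheorem2:
  fixes X :: "(real^'dx) set" and Y :: "(real^'dy) set" and Lam :: "(real^'dl) set"
    and fbar :: "real^'dx \<Rightarrow> real^'dy \<Rightarrow> real"
    and A :: "real^'dx^'dl" and B :: "real^'dy^'dl" and c :: "real^'dl"
    and g :: "real^'dy \<Rightarrow> real^'dl \<Rightarrow> real"
    and \<rho> \<epsilon> :: real
    and xe :: "real^'dx" and ye ze :: "real^'dy" and le :: "real^'dl"
  assumes X: "X \<noteq> {}" "convex X" "compact X"
    and Y: "Y \<noteq> {}" "convex Y" "compact Y"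
    and Lam: "Lam \<noteq> {}" "convex Lam" "compact Lam"
    and fbar: "C1_lipgrad (\<lambda>p. fbar (fst p) (snd p)) (X \<times> Y)"
    and g_smooth: "C1_lipgrad (\<lambda>p. g (fst p) (snd p)) (Y \<times> Lam)"
    and g_convex: "\<And>l. l \<in> Lam \<Longrightarrow> convex_on UNIV (\<lambda>y. g y l)"
    and rho: "\<rho> > 0" and eps: "\<epsilon> > 0"
    and opt: "eps_optimal \<epsilon> \<rho> (f_fun fbar A B c) g X Y Lam xe ye le ze"
  shows "(Phi (f_fun fbar A B c) g Y Lam xe
           \<le> Phi_rho_star \<rho> (f_fun fbar A B c) g X Y Lam + 2 * \<epsilon>
             + delta_rho \<rho> (f_fun fbar A B c) g Y Lam xe) \<and>
         (f_fun fbar A B c xe ye le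
           \<ge> Phi_star (f_fun fbar A B c) g X Y Lam - 2 * \<epsilon>
             - delta_rho \<rho> (f_fun fbar A B c) g Y Lam xe) \<and>
         (h_g g Y ye le
           \<le> (1 / \<rho>) * (f_hi (f_fun fbar A B c) X Y Lam - Phi_star (f_fun fbar A B c) g X Y Lam
                + 2 * \<epsilon> + delta_rho \<rho> (f_fun fbar A B c) g Y Lam xe))"
proof -
  define f where "f = f_fun fbar A B c"
  have fc: "continuous_on UNIV (\<lambda>t. f (fst t) (fst (snd t)) (snd (snd t)))"
    unfolding f_def by (rule f_fun_cont[OF C1_cont[OF fbar]])
  have "compact ((\<lambda>t. f (fst t) (fst (snd t)) (snd (snd t))) ` (X \<times> Y \<times> Lam))"
    by (intro compact_continuous_image continuous_on_subset[OF fc] compact_Times X Y Lam) auto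
  then obtain M where M: "\<And>t. t \<in> X \<times> Y \<times> Lam \<Longrightarrow> \<bar>f (fst t) (fst (snd t)) (snd (snd t))\<bar> \<le> M"
    by (metis (no_types, lifting) bounded_iff compact_imp_bounded image_eqI real_norm_def)
  have Mb: "\<And>x y l. x \<in> X \<Longrightarrow> y \<in> Y \<Longrightarrow> l \<in> Lam \<Longrightarrow> \<bar>f x y l\<bar> \<le> M"
    using M by force
  have gc0: "continuous_on UNIV (\<lambda>p. g (fst p) (snd p))" by (rule C1_cont[OF g_smooth])
  have gc: "continuous_on Y (\<lambda>z. g z l)" for l
  proof -
    have "continuous_on Y ((\<lambda>p. g (fst p) (snd p)) \<circ> (\<lambda>z. (z, l)))"
      by (intro continuous_on_compose continuous_intros continuous_on_subset[OF gc0]) auto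
    then show ?thesis by (simp add: o_def)
  qed
  have gmin_ex: "\<exists>y\<in>Y. \<forall>z\<in>Y. g y l \<le> g z l" for l
    using continuous_attains_inf[OF Y(3) Y(1) gc] by blast
  have gbdd: "bdd_below ((\<lambda>z. g z l) ` Y)" for l
    using gmin_ex[of l] by (auto simp: bdd_below_def)
  obtain l0 where l0: "l0 \<in> Lam" using Lam(1) by blast
  obtain y0 where y0: "y0 \<in> Y" "\<forall>z\<in>Y. g y0 l0 \<le> g z l0" using gmin_ex by blast
  have "g y0 l0 = gmin g Y l0" unfolding gmin_def
    by (rule cInf_eq_minimum[symmetric]) (use y0 in auto)
  then have y0F: "(y0, l0) \<in> F_low g Y Lam" unfolding F_low_def using y0 l0 by auto
  have Phi_lb: "Phi f g Y Lam x \<ge> - M" if "x \<in> X" for x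
  proof -
    have "bdd_above ((\<lambda>(y,l). f x y l) ` F_low g Y Lam)"
      unfolding bdd_above_def F_low_def using Mb[OF that] abs_le_D1 by fastforce
    then have "f x y0 l0 \<le> Phi f g Y Lam x" unfolding Phi_def
      using cSup_upper[OF imageI[OF y0F, of "\<lambda>(y,l). f x y l"]] by simp
    moreover have "- M \<le> f x y0 l0" using Mb[OF that y0(1) l0] by linarith
    ultimately show ?thesis by linarith
  qed
  have xe: "xe \<in> X" and ye: "ye \<in> Y" and le: "le \<in> Lam" and ze: "ze \<in> Y"
    using opt unfolding eps_optimal_def by auto
  define Ps where "Ps = P_rho \<rho> f g xe ye le ze"
  define IP where "IP = Inf ((\<lambda>z. P_rho \<rho> f g xe ye le z) ` Y)"
  have o1: "Ps - IP \<le> \<epsilon>" and o2: "F_rho \<rho> f g Y Lam xe - Ps \<le> \<epsilon>"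
    and o3: "Ps - Phi_rho_star \<rho> f g X Y Lam \<le> \<epsilon>"
    using opt unfolding eps_optimal_def Ps_def IP_def F_rho_def Psi_rho_def f_def by auto
  define d where "d = delta_rho \<rho> f g Y Lam xe"
  have PhiF: "Phi f g Y Lam xe \<le> F_rho \<rho> f g Y Lam xe + d"
    unfolding d_def delta_rho_def by linarith
  have Phistar: "Phi_star f g X Y Lam \<le> Phi f g Y Lam xe"
    unfolding Phi_star_def
    by (rule cInf_lower) (use xe Phi_lb in \<open>auto simp: bdd_below_def\<close>)
  have Pbdd: "bdd_below ((\<lambda>z. P_rho \<rho> f g xe ye le z) ` Y)"
  proof -
    obtain m where m: "\<And>z. z \<in> Y \<Longrightarrow> m \<le> g z le" using gbdd[of le] by (auto simp: bdd_below_def)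
    have "f xe ye le - \<rho> * (g ye le - m) \<le> P_rho \<rho> f g xe ye le z" if "z \<in> Y" for z
      unfolding P_rho_def using m[OF that] rho by (simp add: algebra_simps)
    then show ?thesis by (auto simp: bdd_below_def)
  qed
  have IPz: "IP \<le> f xe ye le - \<rho> * g ye le + \<rho> * g z le" if "z \<in> Y" for z
  proof -
    have "IP \<le> P_rho \<rho> f g xe ye le z" unfolding IP_def
      by (rule cInf_lower) (use that Pbdd in auto)
    then show ?thesis by (simp add: P_rho_def algebra_simps)
  qed
  have "(IP - f xe ye le + \<rho> * g ye le) / \<rho> \<le> gmin g Y le"
    unfolding gmin_def
  proof (rule cInf_greatest)
    show "(\<lambda>z. g z le) ` Y \<noteq> {}" using Y(1) by blast
  next
    fix v assume "v \<in> (\<lambda>z. g z le) ` Y"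
    then obtain z where z: "z \<in> Y" "v = g z le" by blast
    show "(IP - f xe ye le + \<rho> * g ye le) / \<rho> \<le> v"
      using IPz[OF z(1)] z(2) rho by (simp add: field_simps)
  qed
  then have IPh: "IP \<le> f xe ye le - \<rho> * h_g g Y ye le"
    using rho unfolding h_g_def by (simp add: field_simps)
  have hpos: "h_g g Y ye le \<ge> 0" unfolding h_g_def gmin_def
    using cInf_lower[OF imageI[OF ye] gbdd, of le] by simp
  have fhi: "f xe ye le \<le> f_hi f X Y Lam"
    unfolding f_hi_def
  proof (rule cSup_upper)
    show "f xe ye le \<in> (\<lambda>(x,y,l). f x y l) ` (X \<times> Y \<times> Lam)"
      using xe ye le by (auto intro!: image_eqI[where x="(xe,ye,le)"])
    show "bdd_above ((\<lambda>(x,y,l). f x y l) ` (X \<times> Y \<times> Lam))"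
      unfolding bdd_above_def using Mb abs_le_D1 by fastforce
  qed
  have c1: "Phi f g Y Lam xe \<le> Phi_rho_star \<rho> f g X Y Lam + 2 * \<epsilon> + d"
    using PhiF o2 o3 by linarith
  have c2: "f xe ye le \<ge> Phi_star f g X Y Lam - 2 * \<epsilon> - d"
    using Phistar PhiF o2 o1 IPh hpos rho
    by (smt (verit, best) mult_nonneg_nonneg)
  have "\<rho> * h_g g Y ye le \<le> f_hi f X Y Lam - Phi_star f g X Y Lam + 2 * \<epsilon> + d"
    using Phistar PhiF o2 o1 IPh fhi by linarith
  then have c3: "h_g g Y ye le \<le> (1 / \<rho>) * (f_hi f X Y Lam - Phi_star f g X Y Lam + 2 * \<epsilon> + d)"
    using rho by (simp add: field_simps)
  show ?thesis using c1 c2 c3 unfolding f_def d_def by auto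
qed

end
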